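(* Let $B>1$ and $k\ge1$ be constants, and let $(\theta_L,\theta_R)$ with $\theta_L,\theta_R\in(0,1)$ be the positive solution of $\exp(-B\sqrt k\,\theta_R)=1-\theta_L$ and $\exp(-\frac{B}{\sqrt k}\theta_L)=1-\theta_R$. Then $(1-\theta_L)(1-\theta_R)B^2<1$.
   Context: $\log$ and $\exp$ are natural. The pair $(\theta_L,\theta_R)$ describes the asymptotic fractions of $V_L$ and $V_R$ lying in the giant component of the bipartite random graph $G(n,kn,\frac{B}{n\sqrt k})$. *)

theory Defs
  imports Complex_Main
begin

end

theory Submission
  imports Defs
begin

lemma key: fixes t :: real assumes "t > 0" shows "t * exp (-t) < 1 - exp (-t)"
proof -
  have "1 + t < exp t" using exp_minus_greater[of "-t"] assms by simp
  hence "(1 + t) * exp (-t) < exp t * exp (-t)" by simp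
  also have "exp t * exp (-t) = 1" by (simp add: exp_minus_inverse)
  finally show ?thesis by (simp add: algebra_simps)
qed

theorem mainTheorem16:
  fixes B k \<theta>L \<theta>R :: real
  assumes "B > 1" and "k \<ge> 1"
    and "0 < \<theta>L" and "\<theta>L < 1" and "0 < \<theta>R" and "\<theta>R < 1"
    and "exp (- B * sqrt k * \<theta>R) = 1 - \<theta>L"
    and "exp (- (B / sqrt k) * \<theta>L) = 1 - \<theta>R"
  shows "(1 - \<theta>L) * (1 - \<theta>R) * B\<^sup>2 < 1"
proof -
  define a where "a = B * sqrt k"
  define b where "b = B / sqrt k"
  have sk: "sqrt k > 0" using assms(2) by simp
  have ab: "a * b = B\<^sup>2" using sk by (simp add: a_def b_def power2_eq_square)
  have a0: "a > 0" "b > 0" using sk assms(1) by (auto simp: a_def b_def)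
  have e1: "exp (-(a * \<theta>R)) = 1 - \<theta>L" using assms(7) by (simp add: a_def)
  have e2: "exp (-(b * \<theta>L)) = 1 - \<theta>R" using assms(8) by (simp add: b_def)
  have h1: "a * \<theta>R * (1 - \<theta>L) < \<theta>L"
    using key[of "a * \<theta>R"] a0 assms(5) e1 by simp
  have h2: "b * \<theta>L * (1 - \<theta>R) < \<theta>R"
    using key[of "b * \<theta>L"] a0 assms(3) e2 by simp
  have p1: "0 \<le> a * \<theta>R * (1 - \<theta>L)" "0 \<le> b * \<theta>L * (1 - \<theta>R)"
    using a0 assms by auto
  have "(a * \<theta>R * (1 - \<theta>L)) * (b * \<theta>L * (1 - \<theta>R)) < \<theta>L * \<theta>R"
    using mult_strict_mono[OF h1 h2] p1 assms(3) by linarith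
  hence "(\<theta>L * \<theta>R) * ((1 - \<theta>L) * (1 - \<theta>R) * (a*b)) < (\<theta>L * \<theta>R) * 1"
    by (simp add: algebra_simps)
  hence "(1 - \<theta>L) * (1 - \<theta>R) * (a*b) < 1"
    using assms(3,5) by (simp add: mult_less_cancel_left)
  thus ?thesis using ab by simp
qed

end
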